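(* Assume $\mu p<1$ and $q\neq \mu p$, and consider the model on the infinite Galton–Watson tree with the information starting at the vertex $x$ at distance $r\ge 0$ from the root. Then $$ P_r (\operatorname{diam} (\mathscr{C}) \geq 2n) \leq \frac{1 - (q / \mu p)^{r + 1}}{1 - (q / \mu p)} \, (\mu p)^n \quad \text{for all integers } n > r. $$
   Context: Let $(p_k)_{k\ge 0}$ be an offspring distribution with $p_0=0$ and finite mean $\mu=\sum_k kp_k$. Let $\mathbb{T}$ be a Galton–Watson tree with root $0$ and offspring distribution $(p_k)$. Fix $p,q\in(0,1)$. Each edge of the tree is replaced by two arrows: the arrow parent $\to$ offspring is open with probability $p$ and the arrow offspring $\to$ parent is open with probability $q$, all arrows independently of each other and of the tree. The source of the information is a vertex $x$ at distance $r$ from the root chosen independently of the offspring numbers of its ancestors and of the percolation (e.g. the vertex obtained from the root by always moving to the first offspring). The cluster is $\mathscr{C}=\{y: \text{there is a directed open path from } x \text{ to } y\}$ (including $x$). Its diameter is $\operatorname{diam}(\mathscr{C})=\max\{d(y,z): y,z\in\mathscr{C}\}$, where $d$ is the graph distance in the tree. $P_r$ denotes probability over both the tree and the percolation when the source is at distance $r$ from the root. *)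

theory Defs
  imports "HOL-Probability.Probability"
begin

text \<open>Vertices of the (Ulam--Harris labelled) Galton--Watson tree are lists of naturals;
  the root is the empty list, the children of v are v@[i] for i < number of offspring of v.
  A random environment assigns to every label v a triple
  (offspring number of v, arrow parent(v) -> v open, arrow v -> parent(v) open).
  The arrow components of the root are unused.\<close>

type_synonym env = "nat list \<Rightarrow> nat \<times> bool \<times> bool"

definition in_tree :: "env \<Rightarrow> nat list \<Rightarrow> bool" where
  "in_tree \<omega> v \<longleftrightarrow> (\<forall>k<length v. v ! k < fst (\<omega> (take k v)))"

definition open_arrow :: "env \<Rightarrow> nat list \<Rightarrow> nat list \<Rightarrow> bool" where
  "open_arrow \<omega> a b \<longleftrightarrow>
     (in_tree \<omega> b \<and> b \<noteq> [] \<and> a = butlast b \<and> fst (snd (\<omega> b))) \<or>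
     (in_tree \<omega> a \<and> a \<noteq> [] \<and> b = butlast a \<and> snd (snd (\<omega> a)))"

definition cluster :: "env \<Rightarrow> nat list \<Rightarrow> nat list set" where
  "cluster \<omega> x = {y. (x, y) \<in> {(a, b). open_arrow \<omega> a b}\<^sup>*}"

fun lcp :: "nat list \<Rightarrow> nat list \<Rightarrow> nat list" where
  "lcp (a # as) (b # bs) = (if a = b then a # lcp as bs else [])"
| "lcp _ _ = []"

definition tree_dist :: "nat list \<Rightarrow> nat list \<Rightarrow> nat" where
  "tree_dist y z = length y + length z - 2 * length (lcp y z)"

definition diam :: "env \<Rightarrow> nat list \<Rightarrow> enat" where
  "diam \<omega> x = (SUP y\<in>cluster \<omega> x. SUP z\<in>cluster \<omega> x. enat (tree_dist y z))"

definition source :: "nat \<Rightarrow> nat list" where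
  "source r = replicate r 0"

text \<open>joint law of tree and percolation: i.i.d. over labels\<close>
definition GW_env :: "nat pmf \<Rightarrow> real \<Rightarrow> real \<Rightarrow> env measure" where
  "GW_env off p q = PiM UNIV (\<lambda>_. measure_pmf (pair_pmf off (pair_pmf (bernoulli_pmf p) (bernoulli_pmf q))))"

end

theory Submission
  imports Defs
begin


lemma lcp_prefix1: "prefix (lcp a b) a"
  by (induction a b rule: lcp.induct) auto
lemma lcp_prefix2: "prefix (lcp a b) b"
  by (induction a b rule: lcp.induct) auto
lemma lcp_max: "prefix u a \<Longrightarrow> prefix u b \<Longrightarrow> length u \<le> length (lcp a b)"
proof (induction a b arbitrary: u rule: lcp.induct)
  case (1 a as b bs)
  then show ?case by (cases u) auto
next
  case ("2_1" v)
  then show ?case by auto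
next
  case ("2_2" v)
  then show ?case by auto
qed

lemma dist_tri:
  "tree_dist y z \<le> tree_dist y x + tree_dist z x"
proof -
  define L where "L = length (lcp y z)"
  define L1 where "L1 = length (lcp y x)"
  define L2 where "L2 = length (lcp z x)"
  have a: "L \<le> length y" "L \<le> length z" "L1 \<le> length y" "L1 \<le> length x" "L2 \<le> length z" "L2 \<le> length x"
    unfolding L_def L1_def L2_def
    using lcp_prefix1 lcp_prefix2 prefix_length_le by blast+
  have "min L1 L2 \<le> L"
  proof -
    have p1: "prefix (lcp y x) x" "prefix (lcp z x) x" by (rule lcp_prefix2)+
    then have "prefix (lcp y x) (lcp z x) \<or> prefix (lcp z x) (lcp y x)"
      using prefix_same_cases by blast
    then show ?thesis
    proof
      assume h: "prefix (lcp y x) (lcp z x)"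
      have "prefix (lcp y x) z" using h lcp_prefix1 prefix_order.trans by blast
      then have "L1 \<le> L" unfolding L1_def L_def using lcp_max lcp_prefix1 by blast
      then show ?thesis by simp
    next
      assume h: "prefix (lcp z x) (lcp y x)"
      have "prefix (lcp z x) y" using h lcp_prefix1 prefix_order.trans by blast
      then have "L2 \<le> L" unfolding L2_def L_def using lcp_max lcp_prefix1 by blast
      then show ?thesis by simp
    qed
  qed
  then show ?thesis unfolding tree_dist_def L_def[symmetric] L1_def[symmetric] L2_def[symmetric]
    using a by linarith
qed

lemma dist_source:
  assumes "i \<le> r"
  shows "tree_dist (replicate (r - i) 0 @ w) (replicate r 0) \<le> i + length w"
proof -
  have "prefix (replicate (r - i) 0) (replicate r (0::nat))"
    using assms by (metis le_add_diff_inverse2 diff_le_self prefix_def replicate_add)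
  then have "r - i \<le> length (lcp (replicate (r - i) 0 @ w) (replicate r 0))"
    using lcp_max[of "replicate (r - i) 0" "replicate (r - i) 0 @ w" "replicate r 0"] by simp
  then show ?thesis unfolding tree_dist_def using assms by simp
qed



definition Dn :: "env \<Rightarrow> nat list \<Rightarrow> nat list \<Rightarrow> bool" where
  "Dn \<omega> v w \<longleftrightarrow> (\<forall>k<length w. w!k < fst (\<omega> (v @ take k w)) \<and> fst (snd (\<omega> (v @ take (Suc k) w))))"

definition Up :: "env \<Rightarrow> nat \<Rightarrow> nat \<Rightarrow> bool" where
  "Up \<omega> r i \<longleftrightarrow> (\<forall>k<i. snd (snd (\<omega> (replicate (r-k) 0))))"

lemma Dn_snoc: "Dn \<omega> v (w@[c]) \<longleftrightarrow> Dn \<omega> v w \<and> c < fst (\<omega> (v@w)) \<and> fst (snd (\<omega> (v@w@[c])))"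
  unfolding Dn_def
  by (auto simp: nth_append less_Suc_eq)

lemma Dn_take: "Dn \<omega> v w \<Longrightarrow> Dn \<omega> v (take j w)"
  unfolding Dn_def by (auto simp: min_def take_take)

lemma Dn_Cons: "Dn \<omega> v (c#w) \<longleftrightarrow> c < fst (\<omega> v) \<and> fst (snd (\<omega> (v@[c]))) \<and> Dn \<omega> (v@[c]) w"
  unfolding Dn_def
  apply (auto simp: All_less_Suc2)
  done

lemma in_tree_snoc: "in_tree \<omega> (y@[c]) \<Longrightarrow> c < fst (\<omega> y)"
  unfolding in_tree_def by (drule spec[of _ "length y"]) auto

lemma cluster_char:
  assumes "y \<in> cluster \<omega> (source r)"
  shows "\<exists>i\<le>r. Up \<omega> r i \<and> (\<exists>w. y = replicate (r-i) 0 @ w \<and> Dn \<omega> (replicate (r-i) 0) w \<and> (0<i \<longrightarrow> w = [] \<or> hd w \<noteq> 0))"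
proof -
  have "(source r, y) \<in> {(a, b). open_arrow \<omega> a b}\<^sup>*" using assms unfolding cluster_def by simp
  then show ?thesis
proof (induction rule: rtrancl_induct)
  case base
  show ?case by (rule exI[of _ 0]) (auto simp: Up_def Dn_def source_def)
next
  case (step y z)
  from step.IH obtain i w where i: "i \<le> r" "Up \<omega> r i" "y = replicate (r-i) 0 @ w"
    "Dn \<omega> (replicate (r-i) 0) w" "0<i \<longrightarrow> w = [] \<or> hd w \<noteq> 0" by blast
  from step.hyps(2) have oa: "open_arrow \<omega> y z" by simp
  show ?case
  proof (cases "in_tree \<omega> z \<and> z \<noteq> [] \<and> y = butlast z \<and> fst (snd (\<omega> z))")
    case True
    then obtain c where zc: "z = y @ [c]" by (metis append_butlast_last_id)
    have "in_tree \<omega> z" using True by blast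
    then have "in_tree \<omega> (y @ [c])" using zc by simp
    then have c: "c < fst (\<omega> y)" by (rule in_tree_snoc)
    have fz: "fst (snd (\<omega> z))" using True by blast
    from fz zc have fz': "fst (snd (\<omega> (y@[c])))" by simp
    have D': "Dn \<omega> (replicate (r-i) 0) (w@[c])"
      unfolding Dn_snoc using i(4) c fz' i(3) by simp
    show ?thesis
    proof (cases "0 < i \<and> w = [] \<and> c = 0")
      case True
      have "z = replicate (r - (i-1)) 0 @ []"
        using True i zc by (simp add: replicate_append_same Suc_diff_le[symmetric])
           (metis Suc_diff_le Suc_pred diff_Suc_Suc replicate_Suc replicate_append_same)
      moreover have "Up \<omega> r (i-1)" using i(2) unfolding Up_def by auto
      ultimately show ?thesis using i by (intro exI[of _ "i-1"]) (auto simp: Dn_def)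
    next
      case False
      then have "0<i \<longrightarrow> w@[c] = [] \<or> hd (w@[c]) \<noteq> 0" using i by (cases w) auto
      then show ?thesis using i D' zc by (intro exI[of _ i]) auto
    qed
  next
    case False
    then have up: "in_tree \<omega> y \<and> y \<noteq> [] \<and> z = butlast y \<and> snd (snd (\<omega> y))"
      using oa unfolding open_arrow_def by blast
    show ?thesis
    proof (cases "w = []")
      case True
      then have "i < r" using up i by auto
      have "z = replicate (r - Suc i) 0 @ []" using up i True
        by (simp add: butlast_conv_take)
      moreover have "Up \<omega> r (Suc i)" using i(2) up i(3) True unfolding Up_def
        by (auto simp: less_Suc_eq)
      ultimately show ?thesis using \<open>i < r\<close> by (intro exI[of _ "Suc i"]) (auto simp: Dn_def)
    next
      case False
      have "z = replicate (r-i) 0 @ butlast w" using up i False by (simp add: butlast_append)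
      moreover have "Dn \<omega> (replicate (r-i) 0) (butlast w)"
        using Dn_take[OF i(4), of "length w - 1"] by (simp add: butlast_conv_take)
      moreover have "0<i \<longrightarrow> butlast w = [] \<or> hd (butlast w) \<noteq> 0"
        using i(5) False by (cases w rule: rev_cases) (auto simp: hd_append split: if_splits)
      ultimately show ?thesis using i by blast
    qed
  qed
qed
qed



lemma pred_coord:
  fixes T :: "'b pmf" and K :: "'a set"
  assumes "c \<in> K"
  shows "Measurable.pred (PiM K (\<lambda>_. measure_pmf T)) (\<lambda>\<omega>. R (\<omega> c))"
proof -
  have "(\<lambda>\<omega>. \<omega> c) -` {t. R t} \<inter> space (PiM K (\<lambda>_. measure_pmf T)) \<in> sets (PiM K (\<lambda>_. measure_pmf T))"
    by (rule measurable_sets[OF measurable_component_singleton[OF assms]]) simp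
  moreover have "(\<lambda>\<omega>. \<omega> c) -` {t. R t} \<inter> space (PiM K (\<lambda>_. measure_pmf T)) = {\<omega>\<in>space (PiM K (\<lambda>_. measure_pmf T)). R (\<omega> c)}"
    by auto
  ultimately show ?thesis unfolding pred_def by simp
qed

lemma pps: "product_prob_space (\<lambda>_::'a. measure_pmf (T::'b pmf))"
  by unfold_locales

lemma indep_coords:
  fixes T :: "'b pmf" and A B :: "'a set" and P Q :: "('a \<Rightarrow> 'b) \<Rightarrow> bool"
  defines "M \<equiv> PiM UNIV (\<lambda>_. measure_pmf T)"
  assumes AB: "A \<inter> B = {}"
    and PA: "Measurable.pred (PiM A (\<lambda>_. measure_pmf T)) P" and QB: "Measurable.pred (PiM B (\<lambda>_. measure_pmf T)) Q"
    and dP: "\<And>\<omega> \<omega>'. (\<forall>c\<in>A. \<omega> c = \<omega>' c) \<Longrightarrow> P \<omega> = P \<omega>'"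
    and dQ: "\<And>\<omega> \<omega>'. (\<forall>c\<in>B. \<omega> c = \<omega>' c) \<Longrightarrow> Q \<omega> = Q \<omega>'"
  shows "measure M {\<omega>\<in>space M. P \<omega> \<and> Q \<omega>} = measure M {\<omega>\<in>space M. P \<omega>} * measure M {\<omega>\<in>space M. Q \<omega>}"
proof -
  interpret product_prob_space "\<lambda>_::'a. measure_pmf T" UNIV by (rule pps)
  have ps: "prob_space M" unfolding M_def by (rule P.prob_space_axioms)
  have iv: "prob_space.indep_vars M (\<lambda>_. measure_pmf T) (\<lambda>i \<omega>. \<omega> i) UNIV"
  proof (subst prob_space.indep_vars_iff_distr_eq_PiM[OF ps])
    show "UNIV \<noteq> {}" by simp
    show "\<And>i. (\<lambda>\<omega>. \<omega> i) \<in> measurable M (measure_pmf T)"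
      unfolding M_def by (rule measurable_component_singleton) simp
    have "distr M (PiM UNIV (\<lambda>_. measure_pmf T)) (\<lambda>x. \<lambda>i\<in>UNIV. x i) = M"
    proof -
      have "(\<lambda>x::'a\<Rightarrow>'b. \<lambda>i\<in>UNIV. x i) = (\<lambda>x. x)" by (simp add: fun_eq_iff)
      then show ?thesis unfolding M_def by (simp only:) (rule distr_id2, simp)
    qed
    also have "\<dots> = (PiM UNIV (\<lambda>i. distr M (measure_pmf T) (\<lambda>\<omega>. \<omega> i)))"
      unfolding M_def using PiM_component by simp
    finally show "distr M (PiM UNIV (\<lambda>_. measure_pmf T)) (\<lambda>x. \<lambda>i\<in>UNIV. x i) = (PiM UNIV (\<lambda>i. distr M (measure_pmf T) (\<lambda>\<omega>. \<omega> i)))" .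
  qed
  have ivr: "prob_space.indep_var M (PiM A (\<lambda>_. measure_pmf T)) (\<lambda>\<omega>. restrict (\<lambda>i. \<omega> i) A)
      (PiM B (\<lambda>_. measure_pmf T)) (\<lambda>\<omega>. restrict (\<lambda>i. \<omega> i) B)"
    by (rule prob_space.indep_var_restrict[OF ps iv AB]) auto
  have sA: "{f\<in>space (PiM A (\<lambda>_. measure_pmf T)). P f} \<in> sets (PiM A (\<lambda>_. measure_pmf T))"
    using PA unfolding pred_def by measurable
  have sB: "{f\<in>space (PiM B (\<lambda>_. measure_pmf T)). Q f} \<in> sets (PiM B (\<lambda>_. measure_pmf T))"
    using QB unfolding pred_def by measurable
  have rA: "P (restrict \<omega> A) = P \<omega>" for \<omega> by (rule dP) auto
  have rB: "Q (restrict \<omega> B) = Q \<omega>" for \<omega> by (rule dQ) auto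
  have spA: "restrict \<omega> A \<in> space (PiM A (\<lambda>_. measure_pmf T))" for \<omega>
    by (simp add: space_PiM)
  have spB: "restrict \<omega> B \<in> space (PiM B (\<lambda>_. measure_pmf T))" for \<omega>
    by (simp add: space_PiM)
  have e1: "(\<lambda>x. (restrict (\<lambda>i. x i) A, restrict (\<lambda>i. x i) B)) -`
      ({f\<in>space (PiM A (\<lambda>_. measure_pmf T)). P f} \<times> {f\<in>space (PiM B (\<lambda>_. measure_pmf T)). Q f}) \<inter> space M
      = {\<omega>\<in>space M. P \<omega> \<and> Q \<omega>}"
    using rA rB spA spB by auto
  have e2: "(\<lambda>x. restrict (\<lambda>i. x i) A) -` {f\<in>space (PiM A (\<lambda>_. measure_pmf T)). P f} \<inter> space M
      = {\<omega>\<in>space M. P \<omega>}" using rA spA by auto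
  have e3: "(\<lambda>x. restrict (\<lambda>i. x i) B) -` {f\<in>space (PiM B (\<lambda>_. measure_pmf T)). Q f} \<inter> space M
      = {\<omega>\<in>space M. Q \<omega>}" using rB spB by auto
  show ?thesis
    using prob_space.indep_varD[OF ps ivr sA sB] unfolding e1 e2 e3 .
qed



lemma exp_sum:
  fixes off :: "nat pmf"
  assumes "integrable (measure_pmf off) real"
  shows "(\<lambda>c. measure_pmf.prob off {c<..}) sums measure_pmf.expectation off real"
proof -
  have e1: "(\<integral>\<^sup>+x. ennreal (real x) \<partial>measure_pmf off) = ennreal (measure_pmf.expectation off real)"
    by (rule nn_integral_eq_integral) (auto intro: assms)
  have fx: "ennreal (real x) = (\<Sum>c. indicator {c<..} x)" for x :: nat
  proof -
    have "(\<Sum>c. indicator {c<..} x :: ennreal) = (\<Sum>c\<in>{..<x}. indicator {c<..} x)"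
      by (rule suminf_finite) auto
    also have "\<dots> = of_nat x" by simp
    finally show ?thesis by (simp add: ennreal_of_nat_eq_real_of_nat)
  qed
  have "(\<integral>\<^sup>+x. ennreal (real x) \<partial>measure_pmf off) = (\<integral>\<^sup>+x. (\<Sum>c. indicator {c<..} x) \<partial>measure_pmf off)"
    by (simp add: fx)
  also have "\<dots> = (\<Sum>c. \<integral>\<^sup>+x. indicator {c<..} x \<partial>measure_pmf off)"
    by (rule nn_integral_suminf) simp
  also have "\<dots> = (\<Sum>c. ennreal (measure_pmf.prob off {c<..}))"
    by (simp add: measure_pmf.emeasure_eq_measure)
  finally have "(\<Sum>c. ennreal (measure_pmf.prob off {c<..})) = ennreal (measure_pmf.expectation off real)"
    using e1 by simp
  then have "(\<lambda>c. ennreal (measure_pmf.prob off {c<..})) sums ennreal (measure_pmf.expectation off real)"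
    using summable_sums[OF summableI, of "\<lambda>c. ennreal (measure_pmf.prob off {c<..})"] by simp
  moreover have "0 \<le> measure_pmf.expectation off real" by simp
  ultimately show ?thesis by simp
qed



lemma pair_rect:
  "measure_pmf.prob (pair_pmf A B) (X \<times> Y) = measure_pmf.prob A X * measure_pmf.prob B Y"
proof -
  have "emeasure (measure_pmf (pair_pmf A B)) (X \<times> Y) = (\<integral>\<^sup>+x. indicator (X \<times> Y) x \<partial>pair_pmf A B)"
    by simp
  also have "\<dots> = (\<integral>\<^sup>+a. \<integral>\<^sup>+b. indicator X a * indicator Y b \<partial>B \<partial>A)"
    unfolding nn_integral_pair_pmf' by (simp add: indicator_times)
  also have "\<dots> = (\<integral>\<^sup>+a. indicator X a * emeasure B Y \<partial>A)"
    by (subst nn_integral_cmult) simp_all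
  also have "\<dots> = emeasure A X * emeasure B Y"
    by (subst nn_integral_multc) simp_all
  finally have "ennreal (measure_pmf.prob (pair_pmf A B) (X \<times> Y)) = ennreal (measure_pmf.prob A X) * ennreal (measure_pmf.prob B Y)"
    by (simp only: measure_pmf.emeasure_eq_measure)
  also have "\<dots> = ennreal (measure_pmf.prob A X * measure_pmf.prob B Y)"
    by (rule ennreal_mult[symmetric]) simp_all
  finally show ?thesis by (subst (asm) ennreal_inj) simp_all
qed



lemma union_bound:
  fixes M :: "'a measure" and B :: "nat \<Rightarrow> 'a set"
  assumes fm: "finite_measure M" and sub: "A \<subseteq> (\<Union>c. B c)" and Bs: "\<And>c. B c \<in> sets M"
    and le: "\<And>c. measure M (B c) \<le> f c" and fs: "f sums s"
  shows "measure M A \<le> s"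
proof -
  interpret finite_measure M by (rule fm)
  have s1: "summable (\<lambda>c. measure M (B c))"
    by (rule summable_comparison_test[of _ f]) (use le sums_summable[OF fs] in auto)
  have "measure M A \<le> measure M (\<Union>c. B c)" by (rule finite_measure_mono) (use sub Bs in auto)
  also have "\<dots> \<le> (\<Sum>c. measure M (B c))"
    by (rule finite_measure_subadditive_countably) (use Bs s1 in auto)
  also have "\<dots> \<le> (\<Sum>c. f c)" by (rule suminf_le) (use le s1 sums_summable[OF fs] in auto)
  also have "\<dots> = s" using fs sums_unique by metis
  finally show ?thesis .
qed

lemma coord_prob:
  fixes T :: "'b pmf"
  shows "measure (PiM (UNIV::'a set) (\<lambda>_. measure_pmf T)) {\<omega>\<in>space (PiM UNIV (\<lambda>_. measure_pmf T)). R (\<omega> c)}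
    = measure_pmf.prob T {t. R t}"
proof -
  interpret product_prob_space "\<lambda>_::'a. measure_pmf T" UNIV by (rule pps)
  have "emeasure (PiM (UNIV::'a set) (\<lambda>_. measure_pmf T)) {x\<in>space (PiM UNIV (\<lambda>_. measure_pmf T)). x c \<in> {t. R t}}
     = emeasure (measure_pmf T) {t. R t}"
    by (rule emeasure_PiM_Collect_single) auto
  then show ?thesis unfolding measure_def by simp
qed

lemma enn2real_prod': "finite J \<Longrightarrow> enn2real (\<Prod>c\<in>J. f c) = (\<Prod>c\<in>J. enn2real (f c))"
  by (induction J rule: finite_induct) (auto simp: enn2real_mult)

lemma collect_prob:
  fixes T :: "'b pmf" and J :: "'a set"
  assumes "finite J"
  shows "measure (PiM (UNIV::'a set) (\<lambda>_. measure_pmf T)) {\<omega>\<in>space (PiM UNIV (\<lambda>_. measure_pmf T)). \<forall>c\<in>J. \<omega> c \<in> X c}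
    = (\<Prod>c\<in>J. measure_pmf.prob T (X c))"
proof -
  interpret product_prob_space "\<lambda>_::'a. measure_pmf T" UNIV by (rule pps)
  have "emeasure (PiM (UNIV::'a set) (\<lambda>_. measure_pmf T)) {\<omega>\<in>space (PiM UNIV (\<lambda>_. measure_pmf T)). \<forall>c\<in>J. \<omega> c \<in> X c}
     = (\<Prod>c\<in>J. emeasure (measure_pmf T) (X c))"
    by (rule emeasure_PiM_Collect) (use assms in auto)
  then show ?thesis unfolding measure_def by (simp add: enn2real_prod' assms)
qed

definition Tev :: "env \<Rightarrow> nat \<Rightarrow> nat list \<Rightarrow> bool" where
  "Tev \<omega> m u \<longleftrightarrow> (\<exists>w. length w = m \<and> fst (snd (\<omega> u)) \<and> Dn \<omega> u w)"

lemma Tev_0: "Tev \<omega> 0 u \<longleftrightarrow> fst (snd (\<omega> u))"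
  by (simp add: Tev_def Dn_def)

lemma Tev_Suc: "Tev \<omega> (Suc m) u \<longleftrightarrow> (\<exists>c. (fst (snd (\<omega> u)) \<and> c < fst (\<omega> u)) \<and> Tev \<omega> m (u@[c]))"
proof
  assume "Tev \<omega> (Suc m) u"
  then obtain w where w: "length w = Suc m" "fst (snd (\<omega> u))" "Dn \<omega> u w" unfolding Tev_def by blast
  then obtain c w' where "w = c # w'" by (cases w) auto
  then show "\<exists>c. (fst (snd (\<omega> u)) \<and> c < fst (\<omega> u)) \<and> Tev \<omega> m (u@[c])"
    using w by (auto simp: Tev_def Dn_Cons)
next
  assume "\<exists>c. (fst (snd (\<omega> u)) \<and> c < fst (\<omega> u)) \<and> Tev \<omega> m (u@[c])"
  then obtain c w' where "fst (snd (\<omega> u))" "c < fst (\<omega> u)" "length w' = m"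
    "fst (snd (\<omega> (u@[c])))" "Dn \<omega> (u@[c]) w'" unfolding Tev_def by blast
  then show "Tev \<omega> (Suc m) u" unfolding Tev_def by (intro exI[of _ "c#w'"]) (simp add: Dn_Cons)
qed

lemma Tev_dep:
  assumes "\<forall>x\<in>range ((@) u). \<omega> x = \<omega>' x"
  shows "Tev \<omega> m u = Tev \<omega>' m u"
proof -
  have h1: "\<And>v. \<omega> (u@v) = \<omega>' (u@v)" using assms by auto
  have h2: "\<omega> u = \<omega>' u" using h1[of "[]"] by simp
  show ?thesis unfolding Tev_def Dn_def by (simp add: h1 h2)
qed

lemma Tev_pred:
  fixes T :: "(nat \<times> bool \<times> bool) pmf"
  assumes "range ((@) u) \<subseteq> K"
  shows "Measurable.pred (PiM K (\<lambda>_. measure_pmf T)) (\<lambda>\<omega>. Tev \<omega> m u)"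
proof -
  have u: "u \<in> K" using assms by (metis append_Nil2 rangeI subsetD)
  have uv: "u @ v \<in> K" for v using assms by auto
  show ?thesis
    unfolding Tev_def Dn_def
    by (intro pred_intros_countable(2) pred_intros_conj1' pred_intros_logic(3) pred_intros_countable(1)
        pred_intros_imp' pred_coord u uv)
qed



definition TT :: "nat pmf \<Rightarrow> real \<Rightarrow> real \<Rightarrow> (nat \<times> bool \<times> bool) pmf" where
  "TT off p q = pair_pmf off (pair_pmf (bernoulli_pmf p) (bernoulli_pmf q))"

lemma GW_TT: "GW_env off p q = PiM UNIV (\<lambda>_. measure_pmf (TT off p q))"
  by (simp add: GW_env_def TT_def)

lemma prob_UNIV_pmf: "measure_pmf.prob M UNIV = 1"
  using measure_pmf.prob_space by simp

lemma PT1: "0 \<le> p \<Longrightarrow> p \<le> 1 \<Longrightarrow> measure_pmf.prob (TT off p q) {t. fst (snd t)} = p"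
proof -
  assume "0 \<le> p" "p \<le> 1"
  have "{t::nat\<times>bool\<times>bool. fst (snd t)} = UNIV \<times> ({True} \<times> UNIV)" by auto
  then show ?thesis using \<open>0 \<le> p\<close> \<open>p \<le> 1\<close>
    by (simp add: TT_def pair_rect prob_UNIV_pmf measure_pmf_single)
qed

lemma PT2: "0 \<le> p \<Longrightarrow> p \<le> 1 \<Longrightarrow> measure_pmf.prob (TT off p q) {t. fst (snd t) \<and> c < fst t} = measure_pmf.prob off {c<..} * p"
proof -
  assume "0 \<le> p" "p \<le> 1"
  have "{t::nat\<times>bool\<times>bool. fst (snd t) \<and> c < fst t} = {c<..} \<times> ({True} \<times> UNIV)" by auto
  then show ?thesis using \<open>0 \<le> p\<close> \<open>p \<le> 1\<close>
    by (simp add: TT_def pair_rect prob_UNIV_pmf measure_pmf_single)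
qed

lemma PT3: "0 \<le> q \<Longrightarrow> q \<le> 1 \<Longrightarrow> measure_pmf.prob (TT off p q) {t. snd (snd t)} = q"
proof -
  assume "0 \<le> q" "q \<le> 1"
  have "{t::nat\<times>bool\<times>bool. snd (snd t)} = UNIV \<times> (UNIV \<times> {True})" by auto
  then show ?thesis using \<open>0 \<le> q\<close> \<open>q \<le> 1\<close>
    by (simp add: TT_def pair_rect prob_UNIV_pmf measure_pmf_single)
qed

lemma PT4: "measure_pmf.prob (TT off p q) {t. c < fst t} = measure_pmf.prob off {c<..}"
proof -
  have "{t::nat\<times>bool\<times>bool. c < fst t} = {c<..} \<times> UNIV" by auto
  then show ?thesis by (simp add: TT_def pair_rect prob_UNIV_pmf)
qed

lemma ps_G: "prob_space (PiM (UNIV::'a set) (\<lambda>_. measure_pmf (T::'b pmf)))"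
  by (rule prob_space_PiM) (simp add: prob_space_measure_pmf)

lemma fm_G: "finite_measure (PiM (UNIV::'a set) (\<lambda>_. measure_pmf (T::'b pmf)))"
  using ps_G unfolding prob_space_def by blast

lemma Up_pred:
  fixes T :: "(nat \<times> bool \<times> bool) pmf"
  assumes "(\<lambda>k. replicate (r-k) 0) ` {..<i} \<subseteq> K"
  shows "Measurable.pred (PiM K (\<lambda>_. measure_pmf T)) (\<lambda>\<omega>. Up \<omega> r i)"
proof -
  have h: "k < i \<Longrightarrow> replicate (r-k) 0 \<in> K" for k using assms by auto
  show ?thesis unfolding Up_def
    by (intro pred_intros_countable(1) pred_intros_imp' pred_coord h)
qed

locale gw =
  fixes off :: "nat pmf" and p q \<mu> :: real
  assumes p0: "0 \<le> p" and p1: "p \<le> 1" and q0: "0 \<le> q" and q1: "q \<le> 1"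
    and int: "integrable (measure_pmf off) real"
    and mu: "\<mu> = measure_pmf.expectation off real"
begin

abbreviation "G \<equiv> PiM (UNIV :: nat list set) (\<lambda>_. measure_pmf (TT off p q))"

lemma mu_sums: "(\<lambda>c. measure_pmf.prob off {c<..}) sums \<mu>"
  using exp_sum[OF int] mu by simp

lemma mu_nonneg: "0 \<le> \<mu>"
  using mu by simp

lemma Tev_bound: "\<forall>u. measure G {\<omega>\<in>space G. Tev \<omega> m u} \<le> p * (\<mu>*p)^m"
proof (induction m)
  case 0
  show ?case
  proof
    fix u
    have "measure G {\<omega>\<in>space G. Tev \<omega> 0 u} = measure G {\<omega> \<in> space G. fst (snd (\<omega> u))}"
      by (simp add: Tev_0)
    also have "\<dots> = measure_pmf.prob (TT off p q) {t. fst (snd t)}"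
      by (rule coord_prob)
    also have "\<dots> = p" by (rule PT1[OF p0 p1])
    finally show "measure G {\<omega>\<in>space G. Tev \<omega> 0 u} \<le> p * (\<mu>*p)^0" by simp
  qed
next
  case (Suc m)
  show ?case
  proof
    fix u
    define B where "B c = {\<omega>\<in>space G. (fst (snd (\<omega> u)) \<and> c < fst (\<omega> u)) \<and> Tev \<omega> m (u@[c])}" for c
    define f where "f c = measure_pmf.prob off {c<..} * p * (p * (\<mu>*p)^m)" for c
    show "measure G {\<omega>\<in>space G. Tev \<omega> (Suc m) u} \<le> p * (\<mu>*p)^Suc m"
    proof (rule union_bound[OF fm_G, where B=B and f=f])
      show "{\<omega>\<in>space G. Tev \<omega> (Suc m) u} \<subseteq> (\<Union>c. B c)"
        unfolding B_def by (auto simp: Tev_Suc)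
      show Bs: "B c \<in> sets G" for c
      proof -
        have "Measurable.pred G (\<lambda>\<omega>. (fst (snd (\<omega> u)) \<and> c < fst (\<omega> u)) \<and> Tev \<omega> m (u@[c]))"
          by (intro pred_intros_logic(3) pred_coord[where R="\<lambda>t. fst (snd t) \<and> c < fst t", simplified]
                Tev_pred) auto
        then show ?thesis unfolding B_def pred_def .
      qed
      show "measure G (B c) \<le> f c" for c
      proof -
        have "measure G (B c) = measure G {\<omega>\<in>space G. fst (snd (\<omega> u)) \<and> c < fst (\<omega> u)}
            * measure G {\<omega>\<in>space G. Tev \<omega> m (u@[c])}"
          unfolding B_def
        proof (rule indep_coords[where A="{u}" and B="range ((@) (u@[c]))"])
          show "{u} \<inter> range ((@) (u @ [c])) = {}" by auto
          show "Measurable.pred (PiM {u} (\<lambda>_. measure_pmf (TT off p q))) (\<lambda>\<omega>. fst (snd (\<omega> u)) \<and> c < fst (\<omega> u))"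
            by (rule pred_coord[where R="\<lambda>t. fst (snd t) \<and> c < fst t", simplified]) simp
          show "Measurable.pred (PiM (range ((@) (u@[c]))) (\<lambda>_. measure_pmf (TT off p q))) (\<lambda>\<omega>. Tev \<omega> m (u@[c]))"
            by (rule Tev_pred) simp
          show "(fst (snd (\<omega> u)) \<and> c < fst (\<omega> u)) = (fst (snd (\<omega>' u)) \<and> c < fst (\<omega>' u))"
            if "\<forall>x\<in>{u}. \<omega> x = \<omega>' x" for \<omega> \<omega>' :: env using that by simp
          show "Tev \<omega> m (u@[c]) = Tev \<omega>' m (u@[c])"
            if "\<forall>x\<in>range ((@) (u@[c])). \<omega> x = \<omega>' x" for \<omega> \<omega>' :: env by (rule Tev_dep[OF that])
        qed
        also have "measure G {\<omega>\<in>space G. fst (snd (\<omega> u)) \<and> c < fst (\<omega> u)} = measure_pmf.prob off {c<..} * p"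
          using coord_prob[where T="TT off p q" and R="\<lambda>t. fst (snd t) \<and> c < fst t" and c=u] PT2[OF p0 p1] by simp
        also have "measure_pmf.prob off {c<..} * p * measure G {\<omega>\<in>space G. Tev \<omega> m (u@[c])} \<le> f c"
          unfolding f_def using Suc.IH p0 by (intro mult_left_mono) auto
        finally show ?thesis .
      qed
      have "f sums (\<mu> * (p * (p * (\<mu>*p)^m)))"
        unfolding f_def mult.assoc by (rule sums_mult2[OF mu_sums])
      moreover have "\<mu> * (p * (p * (\<mu>*p)^m)) = p * (\<mu>*p)^Suc m" by (simp add: algebra_simps)
      ultimately show "f sums (p * (\<mu>*p)^Suc m)" by simp
    qed
  qed
qed

end



lemma pred_const: "Measurable.pred M (\<lambda>_. K)"
  unfolding pred_def by (cases K) auto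

lemma rep_neq: assumes "k < i" "i \<le> r" shows "replicate (r-k) 0 \<noteq> replicate (r-i) (0::nat)"
proof
  assume "replicate (r-k) 0 = replicate (r-i) (0::nat)"
  then have "length (replicate (r-k) (0::nat)) = length (replicate (r-i) (0::nat))" by (simp only:)
  then show False using assms by simp
qed

lemma rep_disj:
  assumes "k \<le> i" "i \<le> r" "(c::nat) \<noteq> 0 \<or> i = 0"
  shows "replicate (r-k) 0 \<noteq> replicate (r-i) 0 @ [c] @ v"
proof
  assume h: "replicate (r-k) 0 = replicate (r-i) 0 @ [c] @ v"
  then have "length (replicate (r-k) (0::nat)) = length (replicate (r-i) 0 @ [c] @ v)" by (rule arg_cong)
  then have len: "r - k = r - i + 1 + length v" by simp
  then have "r - i < r - k" by simp
  then have "replicate (r-k) 0 ! (r-i) = (0::nat)" by simp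
  moreover have "(replicate (r-i) 0 @ [c] @ v) ! (r-i) = c" by (simp add: nth_append)
  ultimately have "c = 0" using h by simp
  moreover have "0 < i" using len assms by linarith
  ultimately show False using assms by simp
qed

context gw
begin

definition Bset :: "nat \<Rightarrow> nat \<Rightarrow> nat \<Rightarrow> nat \<Rightarrow> env set" where
  "Bset r i m c = {\<omega>\<in>space G. (Up \<omega> r i \<and> c < fst (\<omega> (replicate (r-i) 0))) \<and> (0<i \<longrightarrow> c\<noteq>0)
      \<and> Tev \<omega> m (replicate (r-i) 0 @ [c])}"

lemma Bset_sets: "Bset r i m c \<in> sets G"
proof -
  have "Measurable.pred G (\<lambda>\<omega>. (Up \<omega> r i \<and> c < fst (\<omega> (replicate (r-i) 0))) \<and> (0<i \<longrightarrow> c\<noteq>0)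
      \<and> Tev \<omega> m (replicate (r-i) 0 @ [c]))"
    by (intro pred_intros_logic(3) Up_pred pred_coord[where R="\<lambda>t. c < fst t", simplified]
        Tev_pred pred_const) auto
  then show ?thesis unfolding Bset_def pred_def .
qed

lemma Up_prob:
  assumes "i \<le> r"
  shows "measure G {\<omega>\<in>space G. Up \<omega> r i \<and> c < fst (\<omega> (replicate (r-i) 0))}
    = q^i * measure_pmf.prob off {c<..}"
proof -
  define a where "a = replicate (r-i) (0::nat)"
  define rp where "rp k = replicate (r-k) (0::nat)" for k
  define X where "X x = (if x = a then {t::nat\<times>bool\<times>bool. c < fst t} else {t. snd (snd t)})" for x
  have inj: "inj_on rp {..i}"
  proof (rule inj_onI)
    fix k k' assume kk: "k \<in> {..i}" "k' \<in> {..i}" "rp k = rp k'"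
    then have "length (rp k) = length (rp k')" by (simp only:)
    then show "k = k'" using kk(1,2) assms unfolding rp_def by simp
  qed
  have key: "(\<forall>x\<in>rp ` {..i}. \<omega> x \<in> X x) \<longleftrightarrow> Up \<omega> r i \<and> c < fst (\<omega> a)" for \<omega> :: env
  proof -
    have "(\<forall>x\<in>rp ` {..i}. \<omega> x \<in> X x) \<longleftrightarrow> (\<forall>k\<le>i. \<omega> (rp k) \<in> X (rp k))" by auto
    also have "\<dots> \<longleftrightarrow> (\<forall>k<i. \<omega> (rp k) \<in> X (rp k)) \<and> \<omega> (rp i) \<in> X (rp i)"
      by (auto simp: le_less)
    also have "\<dots> \<longleftrightarrow> Up \<omega> r i \<and> c < fst (\<omega> a)"
      using rep_neq[OF _ assms] unfolding Up_def X_def rp_def a_def by auto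
    finally show ?thesis .
  qed
  have "{\<omega>\<in>space G. Up \<omega> r i \<and> c < fst (\<omega> a)} = {\<omega>\<in>space G. \<forall>x\<in>rp ` {..i}. \<omega> x \<in> X x}"
    using key by auto
  also have "measure G \<dots> = (\<Prod>x\<in>rp ` {..i}. measure_pmf.prob (TT off p q) (X x))"
    by (rule collect_prob) simp
  also have "\<dots> = (\<Prod>k\<in>{..i}. measure_pmf.prob (TT off p q) (X (rp k)))"
    by (rule prod.reindex[OF inj, unfolded comp_def])
  also have "\<dots> = (\<Prod>k\<in>{..<i}. measure_pmf.prob (TT off p q) (X (rp k))) * measure_pmf.prob (TT off p q) (X (rp i))"
    by (simp add: lessThan_Suc_atMost[symmetric])
  also have "(\<Prod>k\<in>{..<i}. measure_pmf.prob (TT off p q) (X (rp k))) = (\<Prod>k\<in>{..<i}. q)"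
    by (rule prod.cong) (use rep_neq[OF _ assms] PT3[OF q0 q1] in \<open>auto simp: X_def rp_def a_def\<close>)
  also have "measure_pmf.prob (TT off p q) (X (rp i)) = measure_pmf.prob off {c<..}"
    by (simp add: X_def rp_def a_def PT4)
  finally show ?thesis unfolding a_def by simp
qed

lemma Bset_bound:
  assumes "i \<le> r"
  shows "measure G (\<Union>c. Bset r i m c) \<le> q^i * (\<mu>*p)^Suc m"
proof -
  define f where "f c = measure_pmf.prob off {c<..} * (q^i * (p * (\<mu>*p)^m))" for c
  define a where "a = replicate (r-i) (0::nat)"
  show ?thesis
  proof (rule union_bound[OF fm_G, where B="Bset r i m" and f=f])
    show "(\<Union>c. Bset r i m c) \<subseteq> (\<Union>c. Bset r i m c)" by simp
    show "Bset r i m c \<in> sets G" for c by (rule Bset_sets)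
    show "measure G (Bset r i m c) \<le> f c" for c
    proof (cases "0 < i \<and> c = 0")
      case True
      then have "Bset r i m c = {}" unfolding Bset_def by auto
      then show ?thesis unfolding f_def using p0 q0 mu_nonneg by simp
    next
      case False
      then have cc: "c \<noteq> 0 \<or> i = 0" by auto
      have eq: "Bset r i m c = {\<omega>\<in>space G. (Up \<omega> r i \<and> c < fst (\<omega> a)) \<and> Tev \<omega> m (a @ [c])}"
        unfolding Bset_def a_def using False by auto
      define A where "A = (\<lambda>k. replicate (r-k) (0::nat)) ` {..i}"
      have "measure G (Bset r i m c) = measure G {\<omega>\<in>space G. Up \<omega> r i \<and> c < fst (\<omega> a)}
            * measure G {\<omega>\<in>space G. Tev \<omega> m (a@[c])}"
        unfolding eq
      proof (rule indep_coords[where A=A and B="range ((@) (a@[c]))"])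
        show "A \<inter> range ((@) (a @ [c])) = {}"
          unfolding A_def a_def using rep_disj[OF _ assms cc] by auto
        show "Measurable.pred (PiM A (\<lambda>_. measure_pmf (TT off p q))) (\<lambda>\<omega>. Up \<omega> r i \<and> c < fst (\<omega> a))"
          by (intro pred_intros_logic(3) Up_pred pred_coord[where R="\<lambda>t. c < fst t", simplified])
             (auto simp: A_def a_def)
        show "Measurable.pred (PiM (range ((@) (a@[c]))) (\<lambda>_. measure_pmf (TT off p q))) (\<lambda>\<omega>. Tev \<omega> m (a@[c]))"
          by (rule Tev_pred) simp
        show "(Up \<omega> r i \<and> c < fst (\<omega> a)) = (Up \<omega>' r i \<and> c < fst (\<omega>' a))"
          if h: "\<forall>x\<in>A. \<omega> x = \<omega>' x" for \<omega> \<omega>' :: env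
        proof -
          have h1: "\<And>k. k < i \<Longrightarrow> \<omega> (replicate (r-k) 0) = \<omega>' (replicate (r-k) 0)"
            using h unfolding A_def by auto
          have h2: "\<omega> a = \<omega>' a" using h unfolding A_def a_def by auto
          show ?thesis unfolding Up_def using h1 h2 by auto
        qed
        show "Tev \<omega> m (a@[c]) = Tev \<omega>' m (a@[c])"
          if "\<forall>x\<in>range ((@) (a@[c])). \<omega> x = \<omega>' x" for \<omega> \<omega>' :: env by (rule Tev_dep[OF that])
      qed
      also have "measure G {\<omega>\<in>space G. Up \<omega> r i \<and> c < fst (\<omega> a)} = q^i * measure_pmf.prob off {c<..}"
        unfolding a_def by (rule Up_prob[OF assms])
      also have "q^i * measure_pmf.prob off {c<..} * measure G {\<omega>\<in>space G. Tev \<omega> m (a@[c])} \<le> f c"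
      proof -
        have t: "measure G {\<omega>\<in>space G. Tev \<omega> m (a@[c])} \<le> p * (\<mu>*p)^m" using Tev_bound[of m] by blast
        have nn: "0 \<le> q^i * measure_pmf.prob off {c<..}" using q0 by simp
        have "q^i * measure_pmf.prob off {c<..} * measure G {\<omega>\<in>space G. Tev \<omega> m (a@[c])}
            \<le> q^i * measure_pmf.prob off {c<..} * (p * (\<mu>*p)^m)" using t nn by (rule mult_left_mono)
        also have "\<dots> = f c" unfolding f_def by (simp add: algebra_simps)
        finally show ?thesis .
      qed
      finally show ?thesis .
    qed
    have "f sums (\<mu> * (q^i * (p * (\<mu>*p)^m)))"
      unfolding f_def by (rule sums_mult2[OF mu_sums])
    moreover have "\<mu> * (q^i * (p * (\<mu>*p)^m)) = q^i * (\<mu>*p)^Suc m" by (simp add: algebra_simps)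
    ultimately show "f sums (q^i * (\<mu>*p)^Suc m)" by simp
  qed
qed

end



lemma enat_le_SUP:
  fixes f :: "'a \<Rightarrow> enat"
  assumes "enat k \<le> (SUP y\<in>A. f y)" "A \<noteq> {}"
  shows "\<exists>y\<in>A. enat k \<le> f y"
proof (cases k)
  case 0 then show ?thesis using assms(2) by (auto simp: zero_enat_def[symmetric])
next
  case (Suc k')
  then have "enat k' < (SUP y\<in>A. f y)" using assms(1) by (simp add: Suc_ile_eq)
  then obtain y where "y\<in>A" "enat k' < f y" by (auto simp: less_SUP_iff)
  then show ?thesis using Suc by (auto simp: Suc_ile_eq)
qed

lemma source_in: "x \<in> cluster \<omega> x" by (simp add: cluster_def)

lemma diam_iff: "enat k \<le> diam \<omega> x \<longleftrightarrow> (\<exists>y z. y \<in> cluster \<omega> x \<and> z \<in> cluster \<omega> x \<and> k \<le> tree_dist y z)"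
proof
  assume h: "enat k \<le> diam \<omega> x"
  from enat_le_SUP[OF h[unfolded diam_def]] source_in obtain y where
    y: "y \<in> cluster \<omega> x" "enat k \<le> (SUP z\<in>cluster \<omega> x. enat (tree_dist y z))" by blast
  from enat_le_SUP[OF y(2)] source_in obtain z where "z \<in> cluster \<omega> x" "enat k \<le> enat (tree_dist y z)" by blast
  then show "\<exists>y z. y \<in> cluster \<omega> x \<and> z \<in> cluster \<omega> x \<and> k \<le> tree_dist y z" using y by auto
next
  assume "\<exists>y z. y \<in> cluster \<omega> x \<and> z \<in> cluster \<omega> x \<and> k \<le> tree_dist y z"
  then obtain y z where yz: "y \<in> cluster \<omega> x" "z \<in> cluster \<omega> x" "k \<le> tree_dist y z" by blast
  have "enat k \<le> enat (tree_dist y z)" using yz by simp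
  also have "\<dots> \<le> (SUP z\<in>cluster \<omega> x. enat (tree_dist y z))" by (rule SUP_upper) (rule yz(2))
  also have "\<dots> \<le> diam \<omega> x" unfolding diam_def by (rule SUP_upper) (rule yz(1))
  finally show "enat k \<le> diam \<omega> x" .
qed

lemma open_arrow_pred:
  fixes T :: "(nat \<times> bool \<times> bool) pmf"
  shows "Measurable.pred (PiM UNIV (\<lambda>_. measure_pmf T)) (\<lambda>\<omega>. open_arrow \<omega> a b)"
  unfolding open_arrow_def in_tree_def
  by (intro pred_intros_logic(5) pred_intros_logic(3) pred_intros_countable(1) pred_intros_imp'
      pred_coord pred_const UNIV_I)

lemma relpow_pred:
  fixes T :: "(nat \<times> bool \<times> bool) pmf"
  shows "\<forall>y. Measurable.pred (PiM UNIV (\<lambda>_. measure_pmf T)) (\<lambda>\<omega>. (x,y) \<in> {(a,b). open_arrow \<omega> a b} ^^ m)"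
proof (induction m)
  case 0
  show ?case by (simp add: pred_const)
next
  case (Suc m)
  show ?case
  proof
    fix z
    have eq: "((x,z) \<in> {(a,b). open_arrow \<omega> a b} ^^ Suc m) =
      (\<exists>y. (x,y) \<in> {(a,b). open_arrow \<omega> a b} ^^ m \<and> open_arrow \<omega> y z)" for \<omega> by auto
    show "Measurable.pred (PiM UNIV (\<lambda>_. measure_pmf T)) (\<lambda>\<omega>. (x,z) \<in> {(a,b). open_arrow \<omega> a b} ^^ Suc m)"
      unfolding eq by (intro pred_intros_countable(2) pred_intros_logic(3) Suc[rule_format] open_arrow_pred)
  qed
qed

lemma cluster_pred:
  fixes T :: "(nat \<times> bool \<times> bool) pmf"
  shows "Measurable.pred (PiM UNIV (\<lambda>_. measure_pmf T)) (\<lambda>\<omega>. y \<in> cluster \<omega> x)"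
  unfolding cluster_def mem_Collect_eq rtrancl_power
  by (intro pred_intros_countable(2) relpow_pred[rule_format])

lemma E_sets:
  fixes T :: "(nat \<times> bool \<times> bool) pmf"
  shows "{\<omega>\<in>space (PiM UNIV (\<lambda>_. measure_pmf T)). enat k \<le> diam \<omega> x} \<in> sets (PiM UNIV (\<lambda>_. measure_pmf T))"
proof -
  have "Measurable.pred (PiM UNIV (\<lambda>_. measure_pmf T)) (\<lambda>\<omega>. enat k \<le> diam \<omega> x)"
    unfolding diam_iff
    by (intro pred_intros_countable(2) pred_intros_logic(3) cluster_pred pred_const)
  then show ?thesis unfolding pred_def .
qed

lemma incl:
  assumes "r < n" "enat (2*n) \<le> diam \<omega> (source r)"
  shows "\<exists>i\<le>r. \<exists>c. (Up \<omega> r i \<and> c < fst (\<omega> (replicate (r-i) 0))) \<and> (0<i \<longrightarrow> c\<noteq>0)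
      \<and> Tev \<omega> (n-i-1) (replicate (r-i) 0 @ [c])"
proof -
  let ?x = "source r"
  from assms(2)[unfolded diam_iff] obtain y z where yz: "y \<in> cluster \<omega> ?x" "z \<in> cluster \<omega> ?x"
    "2*n \<le> tree_dist y z" by blast
  have "tree_dist y z \<le> tree_dist y ?x + tree_dist z ?x" by (rule dist_tri)
  then have "n \<le> tree_dist y ?x \<or> n \<le> tree_dist z ?x" using yz(3) by linarith
  then obtain y' where y': "y' \<in> cluster \<omega> ?x" "n \<le> tree_dist y' ?x" using yz by blast
  from cluster_char[OF y'(1)] obtain i w where iw: "i \<le> r" "Up \<omega> r i" "y' = replicate (r-i) 0 @ w"
    "Dn \<omega> (replicate (r-i) 0) w" "0<i \<longrightarrow> w = [] \<or> hd w \<noteq> 0" by blast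
  have "tree_dist y' ?x \<le> i + length w" unfolding iw(3) source_def by (rule dist_source[OF iw(1)])
  then have lw: "n - i \<le> length w" using y'(2) by linarith
  then obtain c w' where w: "w = c # w'" using assms(1) iw(1) by (cases w) auto
  from iw(4)[unfolded w Dn_Cons] have D: "c < fst (\<omega> (replicate (r-i) 0))"
    "fst (snd (\<omega> (replicate (r-i) 0 @ [c])))" "Dn \<omega> (replicate (r-i) 0 @ [c]) w'" by auto
  have "Tev \<omega> (n-i-1) (replicate (r-i) 0 @ [c])"
    unfolding Tev_def using D lw w by (intro exI[of _ "take (n-i-1) w'"]) (auto simp: Dn_take)
  moreover have "0<i \<longrightarrow> c\<noteq>0" using iw(5) w by auto
  ultimately show ?thesis using iw(1,2) D(1) by blast
qed



lemma (in gw) mu_ge1: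
  assumes "pmf off 0 = 0"
  shows "1 \<le> \<mu>"
proof -
  have "measure_pmf.prob off {0<..} = measure_pmf.prob off (space (measure_pmf off) - {0})"
    by (rule arg_cong[where f="measure_pmf.prob off"]) auto
  also have "\<dots> = 1 - measure_pmf.prob off {0}" by (rule measure_pmf.prob_compl) simp
  also have "\<dots> = 1" using assms by (simp add: measure_pmf_single)
  finally have p0': "measure_pmf.prob off {0<..} = 1" .
  have "(\<Sum>c\<in>{0}. measure_pmf.prob off {c<..}) \<le> (\<Sum>c. measure_pmf.prob off {c<..})"
    by (rule sum_le_suminf) (use sums_summable[OF mu_sums] in auto)
  then show ?thesis using p0' sums_unique[OF mu_sums] by simp
qed

theorem theorem3:
  fixes off :: "nat pmf" and p q \<mu> :: real and r n :: nat
  assumes "pmf off 0 = 0"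
    and "integrable (measure_pmf off) real"
    and "\<mu> = measure_pmf.expectation off real"
    and "0 < p" and "p < 1" and "0 < q" and "q < 1"
    and "\<mu> * p < 1" and "q \<noteq> \<mu> * p"
    and "r < n"
  shows "{\<omega> \<in> space (GW_env off p q). diam \<omega> (source r) \<ge> enat (2 * n)} \<in> sets (GW_env off p q) \<and>
         measure (GW_env off p q) {\<omega> \<in> space (GW_env off p q). diam \<omega> (source r) \<ge> enat (2 * n)}
           \<le> (1 - (q / (\<mu> * p)) ^ (r + 1)) / (1 - q / (\<mu> * p)) * (\<mu> * p) ^ n"
proof -
  interpret gw off p q \<mu>
    by unfold_locales (use assms in auto)
  have mu1: "1 \<le> \<mu>" by (rule mu_ge1[OF assms(1)])
  define E where "E = {\<omega> \<in> space G. enat (2 * n) \<le> diam \<omega> (source r)}"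
  have Es: "E \<in> sets G" unfolding E_def by (rule E_sets)
  define U where "U = (\<Union>i\<in>{..r}. \<Union>c. Bset r i (n-i-1) c)"
  have sub: "E \<subseteq> U"
  proof
    fix \<omega> assume "\<omega> \<in> E"
    then have sp: "\<omega> \<in> space G" and d: "enat (2 * n) \<le> diam \<omega> (source r)" unfolding E_def by auto
    from incl[OF assms(10) d] obtain i c where "i \<le> r"
      "(Up \<omega> r i \<and> c < fst (\<omega> (replicate (r-i) 0))) \<and> (0<i \<longrightarrow> c\<noteq>0)
      \<and> Tev \<omega> (n-i-1) (replicate (r-i) 0 @ [c])" by blast
    then show "\<omega> \<in> U" unfolding U_def Bset_def using sp by blast
  qed
  have Us: "U \<in> sets G" unfolding U_def
    by (intro sets.finite_UN sets.countable_UN) (auto intro: Bset_sets)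
  have "measure G E \<le> measure G U"
    by (rule finite_measure.finite_measure_mono[OF fm_G sub Us])
  also have "\<dots> \<le> (\<Sum>i\<in>{..r}. measure G (\<Union>c. Bset r i (n-i-1) c))"
    unfolding U_def by (rule measure_UNION_le) (auto intro: sets.countable_UN Bset_sets)
  also have "\<dots> \<le> (\<Sum>i\<in>{..r}. q^i * (\<mu>*p)^Suc (n-i-1))"
    by (rule sum_mono) (rule Bset_bound, simp)
  also have "\<dots> = (\<Sum>i\<in>{..r}. (q/(\<mu>*p))^i * (\<mu>*p)^n)"
  proof (rule sum.cong)
    fix i assume "i \<in> {..r}"
    then have i: "i \<le> r" by simp
    have mp: "\<mu>*p \<noteq> 0" using mu1 assms(4) by simp
    have "Suc (n-i-1) = (n-i)" using i assms(10) by simp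
    moreover have "(\<mu>*p)^n = (\<mu>*p)^i * (\<mu>*p)^(n-i)"
      using i assms(10) by (simp add: power_add[symmetric])
    ultimately show "q^i * (\<mu>*p)^Suc (n-i-1) = (q/(\<mu>*p))^i * (\<mu>*p)^n"
      using mp by (simp add: power_divide)
  qed simp
  also have "\<dots> = (\<Sum>i<Suc r. (q/(\<mu>*p))^i) * (\<mu>*p)^n"
    by (simp add: sum_distrib_right lessThan_Suc_atMost)
  also have "(\<Sum>i<Suc r. (q/(\<mu>*p))^i) = (1 - (q/(\<mu>*p))^(r+1)) / (1 - q/(\<mu>*p))"
  proof -
    have mp: "\<mu>*p \<noteq> 0" using mu1 assms(4) by simp
    have "q/(\<mu>*p) \<noteq> 1" using assms(9) mp by (auto simp: field_simps)
    then show ?thesis by (subst sum_gp_strict) auto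
  qed
  finally have "measure G E \<le> (1 - (q / (\<mu> * p)) ^ (r + 1)) / (1 - q / (\<mu> * p)) * (\<mu> * p) ^ n" .
  then show ?thesis using Es unfolding E_def GW_TT by simp
qed


end
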